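(* Let $S \subseteq \mathbb{R}^n$ be nonempty, closed and convex, and let $F_i = f_i + g_i$, $i=1,\dots,m$, where each $f_i \colon S \to \mathbb{R}$ is continuously differentiable and each $g_i \colon S \to \mathbb{R}$ is convex. For $\ell>0$ define \[ w_\ell(x) := \max_{y \in S} \min_{i = 1,\dots,m} \left\{ \nabla f_i(x)^\top (x - y) + g_i(x) - g_i(y) - \frac{\ell}{2}\|x - y\|^2 \right\}, \quad x\in S. \] Let $\ell > 0$ and let $r$ be any scalar with $r \ge \ell$. Then \[ w_r(x) \le w_\ell(x) \le \frac{r}{\ell} w_r(x) \quad \text{for all } x \in S. \] *)

theory Defs
  imports "HOL-Analysis.Analysis"
begin

definition merit_w ::
  "(nat \<Rightarrow> 'a::euclidean_space \<Rightarrow> 'a) \<Rightarrow> (nat \<Rightarrow> 'a \<Rightarrow> real) \<Rightarrow> nat \<Rightarrow> 'a set \<Rightarrow> real \<Rightarrow> 'a \<Rightarrow> real"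
  where
  "merit_w gradf g m S l x =
     (SUP y\<in>S. Min ((\<lambda>i. gradf i x \<bullet> (x - y) + g i x - g i y - l / 2 * (norm (x - y))\<^sup>2) ` {1..m}))"

end

theory Submission
  imports Defs
begin

lemma convex_lower_linear:
  fixes S :: "'a::euclidean_space set" and g :: "'a \<Rightarrow> real"
  assumes "convex S" "S \<noteq> {}" "convex_on S g"
  shows "\<exists>x0 K. x0 \<in> S \<and> K \<ge> 0 \<and> (\<forall>y\<in>S. g x0 - K * norm (y - x0) \<le> g y)"
proof -
  obtain B where B: "B \<subseteq> S" "\<not> affine_dependent B" "affine hull S = affine hull B"
    using affine_basis_exists by blast
  have finB: "finite B" using B(2) aff_independent_finite by blast
  have "B \<noteq> {}" using B assms(2) hull_subset[of S affine] by auto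
  define C where "C = convex hull B"
  have CS: "C \<subseteq> S" unfolding C_def using B(1) assms(1) by (simp add: hull_minimal)
  define M where "M = Max (g ` B)"
  have gM: "\<forall>z\<in>C. g z \<le> M"
    unfolding C_def
    apply (rule convex_on_convex_hull_bound)
    using convex_on_subset[OF assms(3) CS[unfolded C_def]] apply simp
    using finB M_def by auto
  have "C \<noteq> {}" using \<open>B \<noteq> {}\<close> C_def by simp
  moreover have "convex C" unfolding C_def by simp
  ultimately obtain x0 where x0: "x0 \<in> rel_interior C"
    using rel_interior_eq_empty by blast
  then obtain e where e: "e > 0" "ball x0 e \<inter> affine hull C \<subseteq> C" "x0 \<in> C"
    using mem_rel_interior_ball by blast
  have affC: "affine hull C = affine hull S" using B(3) C_def by simp
  have x0S: "x0 \<in> S" using e(3) CS by auto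
  have Mx0: "g x0 \<le> M" using gM e(3) by auto
  define K where "K = 2 * (M - g x0) / e"
  have K0: "K \<ge> 0" using Mx0 e(1) K_def by simp
  have "g x0 - K * norm (y - x0) \<le> g y" if yS: "y \<in> S" for y
  proof (cases "y = x0")
    case True then show ?thesis by simp
  next
    case False
    define d where "d = norm (y - x0)"
    have d0: "d > 0" using False d_def by simp
    define s where "s = e / (2 * d)"
    have s0: "s > 0" using d0 e(1) s_def by simp
    define z where "z = (1 + s) *\<^sub>R x0 + (- s) *\<^sub>R y"
    have "z \<in> affine hull S"
      unfolding z_def
      apply (rule mem_affine[OF affine_affine_hull])
      using x0S yS hull_subset[of S affine] by auto
    moreover have "dist x0 z < e"
    proof -
      have "x0 - z = s *\<^sub>R (y - x0)" unfolding z_def by (simp add: algebra_simps)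
      hence "dist x0 z = s * d" using s0 d_def by (simp add: dist_norm)
      also have "\<dots> = e / 2" using s_def d0 by simp
      finally show ?thesis using e(1) by simp
    qed
    ultimately have zC: "z \<in> C" using e(2) affC by auto
    hence gz: "g z \<le> M" using gM by auto
    define t where "t = s / (1 + s)"
    have t01: "0 \<le> t" "t \<le> 1" using s0 t_def by auto
    have "x0 = (1 - t) *\<^sub>R z + t *\<^sub>R y"
    proof -
      have "(1 - t) = 1 / (1 + s)" using s0 t_def by (simp add: field_simps)
      hence "(1 - t) *\<^sub>R z + t *\<^sub>R y = (1/(1+s)) *\<^sub>R ((1 + s) *\<^sub>R x0 + (- s) *\<^sub>R y) + (s/(1+s)) *\<^sub>R y"
        using z_def t_def by simp
      also have "\<dots> = x0"
      proof -
        have h: "1/(1+s) + s/(1+s) = 1" using s0 by (simp add: field_simps)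
        show ?thesis using s0 apply (simp add: algebra_simps) by (metis h scaleR_add_left scaleR_one)
      qed
      finally show ?thesis by simp
    qed
    hence "g x0 \<le> (1 - t) * g z + t * g y"
      using convex_onD[OF assms(3) t01, of z y] zC CS yS by auto
    moreover have "(1 - t) * g z + t * g y = (g z + s * g y)/(1+s)"
    proof -
      have "1 - t = 1/(1+s)" unfolding t_def using s0 by (simp add: field_simps)
      thus ?thesis unfolding t_def by (simp add: add_divide_distrib)
    qed
    ultimately have "g x0 \<le> (g z + s * g y)/(1+s)" by simp
    moreover have "1 + s > 0" using s0 by simp
    ultimately have "(1 + s) * g x0 \<le> g z + s * g y"
      by (simp add: le_divide_eq mult.commute)
    hence "(1 + s) * g x0 \<le> M + s * g y" using gz by simp
    hence "g x0 - (M - g x0) / s \<le> g y" using s0 by (simp add: field_simps)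
    moreover have "(M - g x0) / s = K * norm (y - x0)"
      unfolding K_def s_def d_def[symmetric] using d0 e(1) by (simp add: field_simps)
    ultimately show ?thesis by simp
  qed
  then show ?thesis using x0S K0 by blast
qed

lemma term_bdd:
  fixes x a x0 :: "'a::euclidean_space" and g :: "'a \<Rightarrow> real"
  assumes low: "\<forall>y\<in>S. g x0 - K * norm (y - x0) \<le> g y" and K0: "K \<ge> 0" and lam: "lam > 0"
  shows "bdd_above ((\<lambda>y. a \<bullet> (x - y) + g x - g y - lam / 2 * (norm (x - y))\<^sup>2) ` S)"
proof -
  define b where "b = norm a + K"
  define c0 where "c0 = g x - g x0 + K * norm (x - x0)"
  have "a \<bullet> (x - y) + g x - g y - lam / 2 * (norm (x - y))\<^sup>2 \<le> c0 + b^2 / (2 * lam)"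
    if yS: "y \<in> S" for y
  proof -
    define D where "D = norm (x - y)"
    have i1: "a \<bullet> (x - y) \<le> norm a * D" unfolding D_def
      by (metis norm_cauchy_schwarz)
    have "norm (y - x0) \<le> D + norm (x - x0)" unfolding D_def
      using norm_triangle_ineq[of "y - x" "x - x0"] norm_minus_commute[of y x] by simp
    hence i2: "- g y \<le> - g x0 + K * (D + norm (x - x0))"
      using low yS K0 mult_left_mono[of "norm (y - x0)" "D + norm (x - x0)" K] by force
    have i3: "b * D - lam / 2 * D^2 \<le> b^2 / (2 * lam)"
    proof -
      have "0 \<le> (lam * D - b)^2" by simp
      hence "0 \<le> lam^2 * D^2 - 2 * lam * b * D + b^2" by (simp add: power2_eq_square algebra_simps)
      hence "2 * lam * (b * D - lam / 2 * D^2) \<le> b^2" by (simp add: power2_eq_square algebra_simps)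
      thus ?thesis using lam by (simp add: le_divide_eq mult.commute)
    qed
    show ?thesis using i1 i2 i3 unfolding b_def c0_def D_def[symmetric]
      by (simp add: algebra_simps)
  qed
  thus ?thesis by (intro bdd_aboveI2) auto
qed

theorem theorem4p2:
  fixes S U :: "'a::euclidean_space set"
    and f g :: "nat \<Rightarrow> 'a \<Rightarrow> real"
    and gradf :: "nat \<Rightarrow> 'a \<Rightarrow> 'a"
    and m :: nat and l r :: real
  assumes "S \<noteq> {}" and "closed S" and "convex S"
    and "m \<ge> 1"
    and "open U" and "S \<subseteq> U"
    and "\<And>i x. i \<in> {1..m} \<Longrightarrow> x \<in> U \<Longrightarrow> (f i has_derivative (\<lambda>h. gradf i x \<bullet> h)) (at x)"
    and "\<And>i. i \<in> {1..m} \<Longrightarrow> continuous_on U (gradf i)"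
    and "\<And>i. i \<in> {1..m} \<Longrightarrow> convex_on S (g i)"
    and "l > 0" and "r \<ge> l"
  shows "\<forall>x\<in>S. merit_w gradf g m S r x \<le> merit_w gradf g m S l x
               \<and> merit_w gradf g m S l x \<le> (r / l) * merit_w gradf g m S r x"
proof
  fix x assume xS: "x \<in> S"
  define T where "T = (\<lambda>lam y i. gradf i x \<bullet> (x - y) + g i x - g i y - lam / 2 * (norm (x - y))\<^sup>2)"
  define phi where "phi = (\<lambda>lam y. Min ((T lam y) ` {1..m}))"
  have W: "merit_w gradf g m S lam x = (SUP y\<in>S. phi lam y)" for lam
    unfolding merit_w_def phi_def T_def by simp
  have fin: "finite {1..m}" and ne: "{1..m} \<noteq> {}" and one: "1 \<in> {1..m}" using assms(4) by auto
  obtain x0 K where xK: "x0 \<in> S" "K \<ge> 0" "\<forall>y\<in>S. g 1 x0 - K * norm (y - x0) \<le> g 1 y"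
    using convex_lower_linear[OF assms(3) assms(1) assms(9)[OF one]] by blast
  have bdd: "bdd_above ((phi lam) ` S)" if "lam > 0" for lam
  proof -
    have b: "bdd_above ((\<lambda>y. T lam y 1) ` S)"
      unfolding T_def using term_bdd[OF xK(3) xK(2) that] by simp
    have P: "phi lam y \<le> T lam y 1" for y
      unfolding phi_def using fin one by simp
    from b obtain M where M: "\<forall>y\<in>S. T lam y 1 \<le> M" by (auto simp: bdd_above_def)
    have "phi lam y \<le> M" if "y \<in> S" for y
    proof -
      have "T lam y 1 \<le> M" using M that by blast
      thus ?thesis using P[of y] by linarith
    qed
    thus ?thesis by (intro bdd_aboveI2[where M=M])
  qed
  have rpos: "r > 0" using assms by simp
  have part1: "(SUP y\<in>S. phi r y) \<le> (SUP y\<in>S. phi l y)"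
  proof (rule cSUP_mono[OF assms(1) bdd[OF assms(10)]])
    fix y assume "y \<in> S"
    have "T r y i \<le> T l y i" for i
    proof -
      have "l / 2 * (norm (x - y))\<^sup>2 \<le> r / 2 * (norm (x - y))\<^sup>2"
        using assms(11) by (intro mult_right_mono) auto
      thus ?thesis unfolding T_def by linarith
    qed
    moreover have "phi l y \<in> T l y ` {1..m}" unfolding phi_def
      by (rule Min_in) (use fin ne in auto)
    then obtain j where j: "j \<in> {1..m}" "phi l y = T l y j" by blast
    moreover have "phi r y \<le> T r y j" unfolding phi_def using fin j(1) by simp
    ultimately have "phi r y \<le> phi l y" by (metis order_trans)
    thus "\<exists>y'\<in>S. phi r y \<le> phi l y'" using \<open>y \<in> S\<close> by blast
  qed
  have part2: "(SUP y\<in>S. phi l y) \<le> (r / l) * (SUP y\<in>S. phi r y)"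
  proof (rule cSUP_least[OF assms(1)])
    fix y assume yS: "y \<in> S"
    define t where "t = l / r"
    have t0: "t > 0" unfolding t_def using assms(10,11) by simp
    have t1: "t \<le> 1" unfolding t_def using assms(10,11) by simp
    have t01: "0 \<le> t" "t \<le> 1" "t > 0" using t0 t1 by auto
    define z where "z = (1 - t) *\<^sub>R x + t *\<^sub>R y"
    have zS: "z \<in> S" using convexD[OF assms(3) xS yS, of "1 - t" t] t01 unfolding z_def by simp
    have key: "t * T l y i \<le> T r z i" if i: "i \<in> {1..m}" for i
    proof -
      have xz: "x - z = t *\<^sub>R (x - y)" unfolding z_def by (simp add: algebra_simps)
      have gz: "g i z \<le> (1 - t) * g i x + t * g i y"
        using convex_onD[OF assms(9)[OF i] t01(1,2) xS yS] z_def by simp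
      have q: "r / 2 * (norm (x - z))\<^sup>2 = t * (l / 2 * (norm (x - y))\<^sup>2)"
        unfolding xz using t01 rpos assms(10) by (simp add: power2_eq_square t_def mult.commute mult.left_commute)
      have lin: "gradf i x \<bullet> (x - z) = t * (gradf i x \<bullet> (x - y))" using xz by simp
      have e1: "t * T l y i = t * (gradf i x \<bullet> (x - y)) + t * g i x - t * g i y - t * (l / 2 * (norm (x - y))\<^sup>2)"
        unfolding T_def by (simp add: algebra_simps)
      have e2: "T r z i = t * (gradf i x \<bullet> (x - y)) + g i x - g i z - t * (l / 2 * (norm (x - y))\<^sup>2)"
        unfolding T_def lin q by simp
      have gz': "g i z \<le> g i x - t * g i x + t * g i y" using gz by (simp add: left_diff_distrib)
      show ?thesis unfolding e1 e2 using gz' by linarith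
    qed
    have "phi r z \<in> T r z ` {1..m}" unfolding phi_def
      by (rule Min_in) (use fin ne in auto)
    then obtain j where j: "j \<in> {1..m}" "phi r z = T r z j" by blast
    have "phi l y \<le> T l y j" unfolding phi_def using fin j(1) by simp
    hence "t * phi l y \<le> phi r z" using key[OF j(1)] j(2) t01 by (metis mult_left_mono order_trans)
    hence "phi l y \<le> phi r z / t" using t01 by (simp add: le_divide_eq mult.commute)
    also have "\<dots> = (r / l) * phi r z" unfolding t_def by simp
    also have "\<dots> \<le> (r / l) * (SUP y\<in>S. phi r y)"
      using cSUP_upper[OF zS bdd[OF rpos]] rpos assms(10) by (intro mult_left_mono) auto
    finally show "phi l y \<le> (r / l) * (SUP y\<in>S. phi r y)" .
  qed
  show "merit_w gradf g m S r x \<le> merit_w gradf g m S l x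
               \<and> merit_w gradf g m S l x \<le> (r / l) * merit_w gradf g m S r x"
    unfolding W using part1 part2 by simp
qed

end
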